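(* Let $k$ be a positive integer. The clique number of $\mathcal F_k$ is $2$ if $k$ is even and $3$ if $k$ is odd.
   Context: The vertex set $V$ consists of all reduced fractions $p/q$ with $p,q\in\mathbb Z$, $\gcd(p,q)=1$, together with $1/0$; here $p/q$ and $(-p)/(-q)$ denote the same vertex. For vertices define $d(p/q,a/b)=|pb-qa|$. The graph $\mathcal F_k$ has vertex set $V$, with an edge between $p/q$ and $a/b$ exactly when $d(p/q,a/b)=k$. *)

theory Defs
  imports Main "HOL-Library.Extended_Nat"
begin

text \<open>Vertices: reduced fractions p/q (gcd p q = 1, which includes 1/0 = (1,0)),
  where (p,q) and (-p,-q) denote the same vertex.\<close>

definition frac_rel :: "(int \<times> int) \<Rightarrow> (int \<times> int) \<Rightarrow> bool" where
  "frac_rel x y \<longleftrightarrow> coprime (fst x) (snd x) \<and> coprime (fst y) (snd y) \<and>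
      (y = x \<or> y = (- fst x, - snd x))"

lemma frac_rel_part_equivp: "part_equivp frac_rel"
proof (rule part_equivpI)
  show "\<exists>x. frac_rel x x" by (rule exI[of _ "(1,0)"]) (simp add: frac_rel_def)
  show "symp frac_rel" by (auto simp: symp_def frac_rel_def)
  show "transp frac_rel" by (auto simp: transp_def frac_rel_def)
qed

quotient_type vertex = "int \<times> int" / partial: frac_rel
  by (rule frac_rel_part_equivp)

lift_definition dist_F :: "vertex \<Rightarrow> vertex \<Rightarrow> int" is
  "\<lambda>(p, q) (a, b). \<bar>p * b - q * a\<bar>"
  by (auto simp: frac_rel_def algebra_simps abs_minus_commute)

definition F_adj :: "nat \<Rightarrow> vertex \<Rightarrow> vertex \<Rightarrow> bool" where
  "F_adj k x y \<longleftrightarrow> dist_F x y = int k"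

definition is_clique_F :: "nat \<Rightarrow> vertex set \<Rightarrow> bool" where
  "is_clique_F k S \<longleftrightarrow> (\<forall>x\<in>S. \<forall>y\<in>S. x \<noteq> y \<longrightarrow> F_adj k x y)"

definition clique_number_F :: "nat \<Rightarrow> enat" where
  "clique_number_F k = (SUP S \<in> {S. finite S \<and> is_clique_F k S}. enat (card S))"

end

theory Submission
  imports Defs
begin

lemma vertex_rep: "\<exists>p q. coprime p q \<and> v = abs_vertex (p, q)"
proof -
  have "frac_rel (rep_vertex v) (rep_vertex v)"
    by (rule Quotient3_rep_reflp[OF Quotient3_vertex])
  moreover have "abs_vertex (rep_vertex v) = v"
    by (rule Quotient3_abs_rep[OF Quotient3_vertex])
  ultimately show ?thesis
    by (cases "rep_vertex v") (auto simp: frac_rel_def)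
qed

lemma dist_abs:
  assumes "coprime p q" "coprime a b"
  shows "dist_F (abs_vertex (p, q)) (abs_vertex (a, b)) = \<bar>p * b - q * a\<bar>"
  using assms by (subst dist_F.abs_eq) (auto simp: frac_rel_def)

lemma dist_self: "dist_F v v = 0"
  using vertex_rep[of v] dist_abs by fastforce

lemma three_form:
  fixes p q a b c d k :: int
  assumes "\<bar>p*b - q*a\<bar> = k" "\<bar>a*d - b*c\<bar> = k" "\<bar>c*q - d*p\<bar> = k" "k \<noteq> 0"
  shows "(c = p + a \<and> d = q + b) \<or> (c = -p - a \<and> d = -q - b) \<or>
         (c = p - a \<and> d = q - b) \<or> (c = a - p \<and> d = b - q)"
proof -
  define D1 where "D1 = p*b - q*a"
  define D2 where "D2 = a*d - b*c"
  define D3 where "D3 = c*q - d*p"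
  have e1: "D1*c + D2*p + D3*a = 0" unfolding D1_def D2_def D3_def by algebra
  have e2: "D1*d + D2*q + D3*b = 0" unfolding D1_def D2_def D3_def by algebra
  have "\<exists>s. (s = 1 \<or> s = -1) \<and> D1 = s*k" "\<exists>s. (s = 1 \<or> s = -1) \<and> D2 = s*k"
     "\<exists>s. (s = 1 \<or> s = -1) \<and> D3 = s*k"
    using assms unfolding D1_def D2_def D3_def
    apply -
    apply (cases "D1 \<ge> 0"; rule exI[of _ "if D1 \<ge> 0 then 1 else -1"]; simp add: D1_def)
    apply (cases "D2 \<ge> 0"; rule exI[of _ "if D2 \<ge> 0 then 1 else -1"]; simp add: D2_def)
    apply (cases "D3 \<ge> 0"; rule exI[of _ "if D3 \<ge> 0 then 1 else -1"]; simp add: D3_def)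
    done
  then obtain s1 s2 s3 where s1: "s1 = 1 \<or> s1 = -1" "D1 = s1*k" and s2: "s2 = 1 \<or> s2 = -1" "D2 = s2*k"
    and s3: "s3 = 1 \<or> s3 = -1" "D3 = s3*k" by blast
  have "k * (s1*c + s2*p + s3*a) = 0" using e1 s1 s2 s3 by (simp add: algebra_simps)
  hence c: "s1*c + s2*p + s3*a = 0" using assms(4) by simp
  have "k * (s1*d + s2*q + s3*b) = 0" using e2 s1 s2 s3 by (simp add: algebra_simps)
  hence d: "s1*d + s2*q + s3*b = 0" using assms(4) by simp
  from s1(1) s2(1) s3(1) c d show ?thesis by auto
qed

lemma three_form2:
  fixes p q a b c d k :: int
  assumes "\<bar>p*b - q*a\<bar> = k" "\<bar>a*d - b*c\<bar> = k" "\<bar>c*q - d*p\<bar> = k" "k \<noteq> 0"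
  shows "\<exists>u s. (u = 1 \<or> u = -1) \<and> (s = 1 \<or> s = -1) \<and> c = u*(p+s*a) \<and> d = u*(q+s*b)"
proof -
  from three_form[OF assms] show ?thesis
  proof (elim disjE conjE)
    assume "c = p + a" "d = q + b" then show ?thesis by (intro exI[of _ 1]) auto
  next
    assume "c = -p - a" "d = -q - b" then show ?thesis by (intro exI[of _ "-1"] exI[of _ 1]) auto
  next
    assume "c = p - a" "d = q - b" then show ?thesis by (intro exI[of _ 1] exI[of _ "-1"]) auto
  next
    assume "c = a - p" "d = b - q" then show ?thesis by (intro exI[of _ "-1"] exI[of _ "-1"]) auto
  qed
qed

lemma no4_int:
  fixes p q a b c d e f k :: int
  assumes "\<bar>p*b - q*a\<bar> = k" "\<bar>a*d - b*c\<bar> = k" "\<bar>c*q - d*p\<bar> = k"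
    "\<bar>a*f - b*e\<bar> = k" "\<bar>e*q - f*p\<bar> = k" "\<bar>c*f - d*e\<bar> = k" "k > 0"
  shows False
proof -
  obtain u s where us: "u = 1 \<or> u = -1" "s = 1 \<or> s = -1" "c = u*(p+s*a)" "d = u*(q+s*b)"
    using three_form2[OF assms(1,2,3)] assms(7) by auto
  obtain u' s' where us': "u' = 1 \<or> u' = -1" "s' = 1 \<or> s' = -1" "e = u'*(p+s'*a)" "f = u'*(q+s'*b)"
    using three_form2[OF assms(1,4,5)] assms(7) by auto
  have "c*f - d*e = (u*u'*(s'-s)) * (p*b-q*a)"
    unfolding us(3,4) us'(3,4) by algebra
  then have "\<bar>c*f - d*e\<bar> = \<bar>u*u'*(s'-s)\<bar> * k" using assms(1) by (simp add: abs_mult)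
  moreover have "\<bar>u*u'*(s'-s)\<bar> = 0 \<or> \<bar>u*u'*(s'-s)\<bar> = 2"
    using us(1,2) us'(1,2) by auto
  ultimately show False using assms(6,7) by auto
qed

lemma coprime_odd: "coprime (p::int) q \<Longrightarrow> odd p \<or> odd q"
proof (rule ccontr)
  assume "coprime p q" "\<not> (odd p \<or> odd q)"
  then have "is_unit (2::int)" using coprime_common_divisor by blast
  then show False by simp
qed

lemma even_int:
  fixes p q a b c d k :: int
  assumes "\<bar>p*b - q*a\<bar> = k" "\<bar>a*d - b*c\<bar> = k" "\<bar>c*q - d*p\<bar> = k" "k > 0" "even k"
    "coprime p q" "coprime a b" "coprime c d"
  shows False
proof -
  have z: "(c = p + a \<and> d = q + b) \<or> (c = -p - a \<and> d = -q - b) \<or>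
         (c = p - a \<and> d = q - b) \<or> (c = a - p \<and> d = b - q)"
    using three_form[OF assms(1,2,3)] assms(4) by simp
  have "p*b - q*a = k \<or> p*b - q*a = -k" using assms(1) by arith
  then have ev: "even (p*b - q*a)" using assms(5) even_minus by metis
  have o1: "odd p \<or> odd q" "odd a \<or> odd b" "odd c \<or> odd d"
    using coprime_odd assms(6,7,8) by blast+
  have "odd (p + a) \<or> odd (q + b)" using z o1(3) by auto
  then show False using ev o1(1,2) by auto
qed

lemma rep2: obtains p q where "coprime p q" "v = abs_vertex (p, q)"
  using vertex_rep by blast

lemma vert_no4:
  assumes "F_adj k x y" "F_adj k y z" "F_adj k z x" "F_adj k y w" "F_adj k w x" "F_adj k z w" "k > 0"
  shows False
proof -
  obtain p q where x: "coprime p q" "x = abs_vertex (p, q)" by (rule rep2)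
  obtain a b where y: "coprime a b" "y = abs_vertex (a, b)" by (rule rep2)
  obtain c d where z: "coprime c d" "z = abs_vertex (c, d)" by (rule rep2)
  obtain e f where w: "coprime e f" "w = abs_vertex (e, f)" by (rule rep2)
  show False
    apply (rule no4_int[of p b q a "int k" d c f e])
    using assms x y z w by (simp_all add: F_adj_def dist_abs)
qed

lemma vert_even:
  assumes "F_adj k x y" "F_adj k y z" "F_adj k z x" "k > 0" "even k"
  shows False
proof -
  obtain p q where x: "coprime p q" "x = abs_vertex (p, q)" by (rule rep2)
  obtain a b where y: "coprime a b" "y = abs_vertex (a, b)" by (rule rep2)
  obtain c d where z: "coprime c d" "z = abs_vertex (c, d)" by (rule rep2)
  show False
    apply (rule even_int[of p b q a "int k" d c])
    using assms x y z by (simp_all add: F_adj_def dist_abs)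
qed

lemma card_ge3: assumes "3 \<le> card S"
  shows "\<exists>x y z. x\<in>S \<and> y\<in>S \<and> z\<in>S \<and> x\<noteq>y \<and> x\<noteq>z \<and> y\<noteq>z"
proof -
  have "finite S" using assms by (metis card.infinite not_numeral_le_zero)
  then obtain T where "T \<subseteq> S" "card T = 3" using assms obtain_subset_with_card_n by metis
  then show ?thesis by (auto simp: card_3_iff)
qed

lemma card_ge4: assumes "4 \<le> card S"
  shows "\<exists>x y z w. x\<in>S \<and> y\<in>S \<and> z\<in>S \<and> w\<in>S \<and> x\<noteq>y \<and> x\<noteq>z \<and> y\<noteq>z \<and> w\<noteq>x \<and> w\<noteq>y \<and> w\<noteq>z"
proof -
  from assms have "Suc 3 \<le> card S" by simp
  then obtain a B where "S = insert a B" "a \<notin> B" "3 \<le> card B"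
    unfolding card_le_Suc_iff by blast
  with card_ge3[of B] show ?thesis by blast
qed

lemma clique_bound:
  assumes "k > 0" "is_clique_F k S"
  shows "card S \<le> (if even k then 2 else 3)"
proof (rule ccontr)
  assume nt: "\<not> ?thesis"
  show False
  proof (cases "even k")
    case True
    then have "3 \<le> card S" using nt by simp
    then obtain x y z where "x\<in>S" "y\<in>S" "z\<in>S" "x\<noteq>y" "x\<noteq>z" "y\<noteq>z" using card_ge3 by blast
    then show False using vert_even[of k x y z] assms True unfolding is_clique_F_def by metis
  next
    case False
    then have "4 \<le> card S" using nt by simp
    then obtain x y z w where "x\<in>S" "y\<in>S" "z\<in>S" "w\<in>S" "x\<noteq>y" "x\<noteq>z" "y\<noteq>z" "w\<noteq>x" "w\<noteq>y" "w\<noteq>z"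
      using card_ge4 by blast
    then show False using vert_no4[of k x y z w] assms unfolding is_clique_F_def by metis
  qed
qed

lemma adj_neq: "F_adj k x y \<Longrightarrow> k > 0 \<Longrightarrow> x \<noteq> y"
  using dist_self by (auto simp: F_adj_def)

lemma clique_exists:
  assumes "k > 0"
  shows "\<exists>S. finite S \<and> is_clique_F k S \<and> card S = (if even k then 2 else 3)"
proof (cases "even k")
  case True
  define x where "x = abs_vertex (1, 0)"
  define y where "y = abs_vertex (1, int k)"
  have a: "F_adj k x y" "F_adj k y x" unfolding x_def y_def F_adj_def
    by (subst dist_abs; simp)+
  have "x \<noteq> y" using adj_neq a assms by blast
  then show ?thesis using a True
    by (intro exI[of _ "{x, y}"]) (auto simp: is_clique_F_def)
next
  case False
  define x where "x = abs_vertex (1, 0)"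
  define y where "y = abs_vertex (1, int k)"
  define z where "z = abs_vertex (2, int k)"
  have cp: "coprime (2::int) (int k)" using False by simp
  have cp': "coprime (int k) 2" using cp by (simp add: coprime_commute)
  have a: "F_adj k x y" "F_adj k y x" "F_adj k x z" "F_adj k z x" "F_adj k y z" "F_adj k z y"
    unfolding x_def y_def z_def F_adj_def using cp cp'
    by (subst dist_abs; simp)+
  have "x \<noteq> y" "x \<noteq> z" "y \<noteq> z" using adj_neq a assms by blast+
  then show ?thesis using a False
    by (intro exI[of _ "{x, y, z}"]) (auto simp: is_clique_F_def)
qed

theorem lemma2p3:
  fixes k :: nat
  assumes "k > 0"
  shows "clique_number_F k = (if even k then 2 else 3)"
proof (rule antisym)
  show "clique_number_F k \<le> (if even k then 2 else 3)"
    unfolding clique_number_F_def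
  proof (rule SUP_least)
    fix S assume "S \<in> {S. finite S \<and> is_clique_F k S}"
    then have "card S \<le> (if even k then 2 else 3)" using clique_bound assms by blast
    then show "enat (card S) \<le> (if even k then 2 else 3)"
      by (cases "even k") (simp_all add: numeral_eq_enat)
  qed
next
  obtain S where S: "finite S" "is_clique_F k S" "card S = (if even k then 2 else 3)"
    using clique_exists assms by blast
  have "enat (card S) \<le> clique_number_F k"
    unfolding clique_number_F_def using S by (intro SUP_upper) auto
  then show "(if even k then 2 else 3) \<le> clique_number_F k"
    using S(3) by (cases "even k") (simp_all add: numeral_eq_enat)
qed

end
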